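(* Let $n\in\mathbb{N}\cup\{0\}$, $A_1,\dots,A_n\in\mathscr{Q}$ and $\mathcal{A}=\{A_1,\dots,A_n\}$. An option set $S\in\mathscr{Q}$ belongs to $\mathrm{Ex}(\mathcal{A})$ if and only if either $S\cap\mathscr{V}_{>0}\neq\emptyset$, or $n\neq0$ and for every $\mathbf{u}\in\times_{j=1}^nA_j$ there exist some $s\in S\cup\{0\}$ and some $\boldsymbol\lambda\in\mathbb{R}^{n,+}$ with $\boldsymbol\lambda\mathbf{u}\le s$.
   Context: Let $\mathcal{X}$ be a nonempty set and let $\mathscr{V}$ be the real vector space of all functions $u:\mathcal{X}\to\mathbb{R}$ (options), with pointwise operations. For $u,v\in\mathscr{V}$, $u\le v$ iff $u(x)\le v(x)$ for all $x\in\mathcal{X}$, and $u<v$ iff $u\le v$ and $u\neq v$. Let $\mathscr{V}_{>0}=\{u\in\mathscr{V}:0<u\}$ and $\mathscr{V}^s_{>0}=\{\{u\}:u\in\mathscr{V}_{>0}\}$. Let $\mathscr{Q}$ be the set of all finite subsets of $\mathscr{V}$ (including $\emptyset$). For a positive integer $n$, $\mathbb{R}^{n,+}=\{\boldsymbol\lambda\in\mathbb{R}^n:\lambda_j\ge0\ \forall j,\ \sum_j\lambda_j>0\}$, and for $\boldsymbol\lambda\in\mathbb{R}^n$, $\mathbf u=(u_1,\dots,u_n)\in\mathscr{V}^n$, $\boldsymbol\lambda\mathbf u=\sum_{j=1}^n\lambda_ju_j$. A set of desirable option sets is any $K\subseteq\mathscr{Q}$. It is coherent if for all $A,B\in K$: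 (K0) $A\setminus\{0\}\in K$; (K1) $\{0\}\notin K$; (K2) $\mathscr{V}^s_{>0}\subseteq K$; (K3) $\{\boldsymbol\lambda(\mathbf u)\mathbf u:\mathbf u\in A\times B\}\in K$ for every map $\boldsymbol\lambda:A\times B\to\mathbb{R}^{2,+}$; (K4) $A\cup Q\in K$ for all $Q\in\mathscr{Q}$. $\bar{\mathbf K}$ denotes the set of coherent sets of desirable option sets. An assessment is any subset $\mathcal{A}\subseteq\mathscr{Q}$. Let $\bar{\mathbf K}(\mathcal A)=\{K\in\bar{\mathbf K}:\mathcal A\subseteq K\}$ and $\mathrm{Ex}(\mathcal A)=\bigcap\bar{\mathbf K}(\mathcal A)$, with the convention $\bigcap\emptyset=\mathscr{Q}$. *)

theory Defs
  imports Complex_Main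
begin

text \<open>Options are functions 'x => real (the type 'x is the nonempty set X).\<close>

definition opt_zero :: "'x \<Rightarrow> real" where
  "opt_zero = (\<lambda>_. 0)"

definition opt_le :: "('x \<Rightarrow> real) \<Rightarrow> ('x \<Rightarrow> real) \<Rightarrow> bool" where
  "opt_le u v \<longleftrightarrow> (\<forall>x. u x \<le> v x)"

definition opt_lt :: "('x \<Rightarrow> real) \<Rightarrow> ('x \<Rightarrow> real) \<Rightarrow> bool" where
  "opt_lt u v \<longleftrightarrow> opt_le u v \<and> u \<noteq> v"

definition Vpos :: "('x \<Rightarrow> real) set" where
  "Vpos = {u. opt_lt opt_zero u}"

definition Vpos_s :: "('x \<Rightarrow> real) set set" where
  "Vpos_s = {{u} | u. u \<in> Vpos}"

definition Qs :: "('x \<Rightarrow> real) set set" where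
  "Qs = {A. finite A}"

definition R2plus :: "(real \<times> real) set" where
  "R2plus = {(a, b). 0 \<le> a \<and> 0 \<le> b \<and> a + b > 0}"

definition coherent :: "('x \<Rightarrow> real) set set \<Rightarrow> bool" where
  "coherent K \<longleftrightarrow> K \<subseteq> Qs \<and>
     (\<forall>A\<in>K. A - {opt_zero} \<in> K) \<and>
     {opt_zero} \<notin> K \<and>
     Vpos_s \<subseteq> K \<and>
     (\<forall>A\<in>K. \<forall>B\<in>K. \<forall>lam :: ('x \<Rightarrow> real) \<times> ('x \<Rightarrow> real) \<Rightarrow> real \<times> real.
        (\<forall>p\<in>A \<times> B. lam p \<in> R2plus) \<longrightarrow>
        {(\<lambda>x. fst (lam p) * fst p x + snd (lam p) * snd p x) | p. p \<in> A \<times> B} \<in> K) \<and>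
     (\<forall>A\<in>K. \<forall>Q\<in>Qs. A \<union> Q \<in> K)"

definition Kbar_of :: "('x \<Rightarrow> real) set set \<Rightarrow> ('x \<Rightarrow> real) set set set" where
  "Kbar_of \<A> = {K. coherent K \<and> \<A> \<subseteq> K}"

definition Ex :: "('x \<Rightarrow> real) set set \<Rightarrow> ('x \<Rightarrow> real) set set" where
  "Ex \<A> = (if Kbar_of \<A> = {} then Qs else \<Inter> (Kbar_of \<A>))"

end

theory Submission
  imports Defs
begin

lemma coh_K3: "coherent K \<Longrightarrow> A\<in>K \<Longrightarrow> B\<in>K \<Longrightarrow> (\<forall>p\<in>A\<times>B. lam p \<in> R2plus) \<Longrightarrow>
   {(\<lambda>x. fst (lam p) * fst p x + snd (lam p) * snd p x) | p. p \<in> A \<times> B} \<in> K"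
  unfolding coherent_def by blast

lemma Vpos_iff: "u \<in> Vpos \<longleftrightarrow> (\<forall>x. 0 \<le> u x) \<and> (\<exists>x. 0 < u x)"
  unfolding Vpos_def opt_lt_def opt_le_def opt_zero_def fun_eq_iff
  by (auto simp: less_le)

lemma replace:
  assumes K: "coherent K" and R: "R \<in> K" and F: "F \<in> K"
  and h: "\<forall>c\<in>F. \<exists>\<alpha> \<beta>. 0\<le>\<alpha> \<and> 0\<le>\<beta> \<and> \<alpha>+\<beta>>0 \<and> good (\<lambda>x. \<alpha> * a x + \<beta> * c x)"
  shows "\<exists>R'\<in>K. \<forall>r\<in>R'. (r\<in>R \<and> r\<noteq>a) \<or> good r"
proof -
  obtain al be where ab: "\<forall>c\<in>F. 0\<le>al c \<and> 0\<le>be c \<and> al c + be c > 0 \<and> good (\<lambda>x. al c * a x + be c * c x)"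
  proof -
    from bchoice[OF h] obtain al where "\<forall>c\<in>F. \<exists>\<beta>. 0\<le>al c \<and> 0\<le>\<beta> \<and> al c+\<beta>>0 \<and> good (\<lambda>x. al c * a x + \<beta> * c x)" by blast
    from bchoice[OF this] obtain be where "\<forall>c\<in>F. 0\<le>al c \<and> 0\<le>be c \<and> al c+be c>0 \<and> good (\<lambda>x. al c * a x + be c * c x)" by blast
    then show ?thesis using that by blast
  qed
  define lam where "lam p = (if fst p = a then (al (snd p), be (snd p)) else (1::real, 0::real))" for p
  have "\<forall>p\<in>R\<times>F. lam p \<in> R2plus" using ab by (auto simp: lam_def R2plus_def)
  then have C: "{(\<lambda>x. fst (lam p) * fst p x + snd (lam p) * snd p x) | p. p \<in> R \<times> F} \<in> K"
    using coh_K3[OF K R F] by blast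
  have "\<forall>r\<in>{(\<lambda>x. fst (lam p) * fst p x + snd (lam p) * snd p x) | p. p \<in> R \<times> F}. (r\<in>R \<and> r\<noteq>a) \<or> good r"
  proof
    fix r assume "r \<in> {(\<lambda>x. fst (lam p) * fst p x + snd (lam p) * snd p x) | p. p \<in> R \<times> F}"
    then obtain b c where bc: "b \<in> R" "c \<in> F" and r: "r = (\<lambda>x. fst (lam (b,c)) * b x + snd (lam (b,c)) * c x)"
      by auto
    show "(r\<in>R \<and> r\<noteq>a) \<or> good r"
    proof (cases "b = a")
      case True then show ?thesis using ab bc r by (simp add: lam_def)
    next
      case False
      then have "r = b" using r by (simp add: lam_def)
      then show ?thesis using False bc by simp
    qed
  qed
  then show ?thesis using C by blast
qed

lemma process:
  assumes K: "coherent K" and R: "R \<in> K" and P: "finite P"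
  and h: "\<forall>a\<in>P. \<exists>F\<in>K. \<forall>c\<in>F. \<exists>\<alpha> \<beta>. 0\<le>\<alpha> \<and> 0\<le>\<beta> \<and> \<alpha>+\<beta>>0 \<and> good (\<lambda>x. \<alpha> * a x + \<beta> * c x)"
  shows "\<exists>R'\<in>K. \<forall>r\<in>R'. (r\<in>R \<and> r\<notin>P) \<or> good r"
  using P h
proof (induction P rule: finite_induct)
  case empty then show ?case using R by auto
next
  case (insert a P)
  from insert obtain R1 where R1: "R1\<in>K" "\<forall>r\<in>R1. (r\<in>R \<and> r\<notin>P) \<or> good r" by auto
  from insert.prems obtain F where F: "F\<in>K" "\<forall>c\<in>F. \<exists>\<alpha> \<beta>. 0\<le>\<alpha> \<and> 0\<le>\<beta> \<and> \<alpha>+\<beta>>0 \<and> good (\<lambda>x. \<alpha> * a x + \<beta> * c x)"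
    by auto
  from replace[OF K R1(1) F] obtain R' where "R'\<in>K" "\<forall>r\<in>R'. (r\<in>R1 \<and> r\<noteq>a) \<or> good r" by blast
  then show ?case using R1 by blast
qed

lemma dom:
  assumes K: "coherent K" and R: "R\<in>K" and S: "S\<in>Qs"
    and h: "\<forall>r\<in>R. \<exists>s\<in>S\<union>{opt_zero}. opt_le r s"
  shows "S \<in> K"
proof -
  have fin: "finite R" using K R by (auto simp: coherent_def Qs_def)
  have one: "{(\<lambda>_. 1::real)} \<in> K"
  proof -
    have "(\<lambda>_. 1::real) \<in> Vpos" by (simp add: Vpos_iff)
    then show ?thesis using K unfolding coherent_def Vpos_s_def by blast
  qed
  have "\<forall>a\<in>R. \<exists>F\<in>K. \<forall>c\<in>F. \<exists>\<alpha> \<beta>. 0\<le>\<alpha> \<and> 0\<le>\<beta> \<and> \<alpha>+\<beta>>0 \<and> (\<lambda>x. \<alpha> * a x + \<beta> * c x) \<in> S\<union>{opt_zero}"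
  proof
    fix a assume "a\<in>R"
    then obtain s where s: "s\<in>S\<union>{opt_zero}" "opt_le a s" using h by blast
    show "\<exists>F\<in>K. \<forall>c\<in>F. \<exists>\<alpha> \<beta>. 0\<le>\<alpha> \<and> 0\<le>\<beta> \<and> \<alpha>+\<beta>>0 \<and> (\<lambda>x. \<alpha> * a x + \<beta> * c x) \<in> S\<union>{opt_zero}"
    proof (cases "s = a")
      case True
      have "\<forall>c\<in>{(\<lambda>_. 1::real)}. (\<lambda>x. 1 * a x + 0 * c x) \<in> S\<union>{opt_zero}"
        using s True by simp
      then show ?thesis using one
        by (intro bexI[of _ "{(\<lambda>_. 1::real)}"] ballI exI[of _ "1::real"] exI[of _ "0::real"]) auto
    next
      case False
      have d: "(\<lambda>x. s x - a x) \<in> Vpos"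
      proof -
        have "\<forall>x. 0 \<le> s x - a x" using s(2) by (simp add: opt_le_def)
        moreover have "\<exists>x. s x \<noteq> a x" using False by (auto simp: fun_eq_iff)
        ultimately show ?thesis unfolding Vpos_iff by (metis diff_gt_0_iff_gt diff_ge_0_iff_ge order_le_neq_trans opt_le_def s(2))
      qed
      then have "{(\<lambda>x. s x - a x)} \<in> K" using K unfolding coherent_def Vpos_s_def by blast
      moreover have "(\<lambda>x. 1 * a x + 1 * (s x - a x)) = s" by auto
      ultimately show ?thesis using s(1)
        by (intro bexI[of _ "{(\<lambda>x. s x - a x)}"] ballI exI[of _ "1::real"] exI[of _ "1::real"]) auto
    qed
  qed
  from process[OF K R fin this] obtain R' where R': "R'\<in>K" "\<forall>r\<in>R'. r \<in> S\<union>{opt_zero}" by blast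
  then have "R' - {opt_zero} \<in> K" using K unfolding coherent_def by blast
  then have "(R' - {opt_zero}) \<union> S \<in> K" using K S unfolding coherent_def by blast
  moreover have "(R' - {opt_zero}) \<union> S = S" using R'(2) by blast
  ultimately show ?thesis by simp
qed

lemma comb:
  assumes K: "coherent K"
  shows "(\<forall>j<n. B j \<in> K) \<Longrightarrow> (\<forall>u. (\<forall>j<n. u j \<in> B j) \<longrightarrow> (\<exists>lam::nat\<Rightarrow>real. (\<forall>j<n. 0 \<le> lam j) \<and> (\<Sum>j<n. lam j) > 0 \<and> good (\<lambda>x. \<Sum>j<n. lam j * u j x)))
     \<Longrightarrow> \<exists>R\<in>K. \<forall>r\<in>R. good r"
proof (induction n arbitrary: good)
  case 0 then show ?case by auto
next
  case (Suc n)
  show ?case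
  proof (cases "n = 0")
    case True
    have "\<forall>b\<in>B 0. \<exists>l. l > 0 \<and> good (\<lambda>x. l * b x)"
    proof
      fix b assume b: "b \<in> B 0"
      obtain lam :: "nat \<Rightarrow> real" where "(\<forall>j<Suc n. 0 \<le> lam j) \<and> (\<Sum>j<Suc n. lam j) > 0 \<and> good (\<lambda>x. \<Sum>j<Suc n. lam j * b x)"
        using Suc.prems(2)[rule_format, of "\<lambda>_. b"] b True by auto
      then show "\<exists>l. l > 0 \<and> good (\<lambda>x. l * b x)" using True by auto
    qed
    from bchoice[OF this] obtain l where l: "\<forall>b\<in>B 0. l b > 0 \<and> good (\<lambda>x. l b * b x)" by blast
    define lam where "lam p = (l (fst p), 0::real)" for p :: "('a \<Rightarrow> real) \<times> ('a \<Rightarrow> real)"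
    have B0: "B 0 \<in> K" using Suc.prems(1) by auto
    have "\<forall>p\<in>B 0 \<times> B 0. lam p \<in> R2plus" using l by (auto simp: lam_def R2plus_def less_imp_le)
    from coh_K3[OF K B0 B0 this] have "{(\<lambda>x. fst (lam p) * fst p x + snd (lam p) * snd p x) | p. p \<in> B 0 \<times> B 0} \<in> K" .
    moreover have "\<forall>r\<in>{(\<lambda>x. fst (lam p) * fst p x + snd (lam p) * snd p x) | p. p \<in> B 0 \<times> B 0}. good r"
      using l by (auto simp: lam_def)
    ultimately show ?thesis by blast
  next
    case False
    have F: "\<forall>a\<in>B n. \<exists>F\<in>K. \<forall>c\<in>F. \<exists>\<alpha> \<beta>. 0\<le>\<alpha> \<and> 0\<le>\<beta> \<and> \<alpha>+\<beta>>0 \<and> good (\<lambda>x. \<alpha> * a x + \<beta> * c x)"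
    proof
      fix a assume a: "a \<in> B n"
      show "\<exists>F\<in>K. \<forall>c\<in>F. \<exists>\<alpha> \<beta>. 0\<le>\<alpha> \<and> 0\<le>\<beta> \<and> \<alpha>+\<beta>>0 \<and> good (\<lambda>x. \<alpha> * a x + \<beta> * c x)"
      proof (rule Suc.IH)
        show "\<forall>j<n. B j \<in> K" using Suc.prems(1) by auto
        show "\<forall>u. (\<forall>j<n. u j \<in> B j) \<longrightarrow> (\<exists>lam::nat\<Rightarrow>real. (\<forall>j<n. 0 \<le> lam j) \<and> (\<Sum>j<n. lam j) > 0 \<and>
           (\<exists>\<alpha> \<beta>. 0\<le>\<alpha> \<and> 0\<le>\<beta> \<and> \<alpha>+\<beta>>0 \<and> good (\<lambda>x. \<alpha> * a x + \<beta> * (\<Sum>j<n. lam j * u j x))))"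
        proof (intro allI impI)
          fix u :: "nat \<Rightarrow> 'a \<Rightarrow> real" assume u: "\<forall>j<n. u j \<in> B j"
          define u' where "u' = u(n := a)"
          have u': "\<forall>j<Suc n. u' j \<in> B j" using u a by (auto simp: u'_def less_Suc_eq)
          obtain lam :: "nat \<Rightarrow> real" where lam: "\<forall>j<Suc n. 0 \<le> lam j" "(\<Sum>j<Suc n. lam j) > 0"
             "good (\<lambda>x. \<Sum>j<Suc n. lam j * u' j x)"
            using Suc.prems(2) u' by blast
          have eq: "(\<lambda>x. \<Sum>j<Suc n. lam j * u' j x) = (\<lambda>x. lam n * a x + 1 * (\<Sum>j<n. lam j * u j x))"
            by (simp add: u'_def add.commute)
          show "\<exists>lam::nat\<Rightarrow>real. (\<forall>j<n. 0 \<le> lam j) \<and> (\<Sum>j<n. lam j) > 0 \<and>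
           (\<exists>\<alpha> \<beta>. 0\<le>\<alpha> \<and> 0\<le>\<beta> \<and> \<alpha>+\<beta>>0 \<and> good (\<lambda>x. \<alpha> * a x + \<beta> * (\<Sum>j<n. lam j * u j x)))"
          proof (cases "(\<Sum>j<n. lam j) > 0")
            case True
            then show ?thesis using lam eq
              by (intro exI[of _ lam] conjI exI[of _ "lam n"] exI[of _ "1::real"]) auto
          next
            case False
            have nn: "\<forall>j<n. 0 \<le> lam j" using lam(1) by auto
            then have "(\<Sum>j<n. lam j) \<ge> 0" by (intro sum_nonneg) auto
            with False have s0: "(\<Sum>j<n. lam j) = 0" by simp
            then have z: "\<forall>j<n. lam j = 0" using nn sum_nonneg_eq_0_iff[of "{..<n}" lam] by auto
            have ln: "lam n > 0" using lam(2) s0 by simp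
            have eq2: "(\<lambda>x. \<Sum>j<Suc n. lam j * u' j x) = (\<lambda>x. lam n * a x + 0 * (\<Sum>j<n. (\<lambda>_. 1::real) j * u j x))"
              using z by (simp add: u'_def)
            have "(\<Sum>j<n. (\<lambda>_. 1::real) j) > 0" using \<open>n \<noteq> 0\<close> by simp
            then show ?thesis using lam eq2 ln
              by (intro exI[of _ "\<lambda>_. 1::real"] conjI exI[of _ "lam n"] exI[of _ "0::real"]) auto
          qed
        qed
      qed
    qed
    have Bn: "B n \<in> K" using Suc.prems(1) by auto
    have fin: "finite (B n)" using K Bn by (auto simp: coherent_def Qs_def)
    from process[OF K Bn fin F] show ?thesis by blast
  qed
qed

definition cnd :: "nat \<Rightarrow> (nat \<Rightarrow> ('x \<Rightarrow> real) set) \<Rightarrow> ('x \<Rightarrow> real) set \<Rightarrow> bool" where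
  "cnd n A S \<longleftrightarrow> n \<noteq> 0 \<and>
      (\<forall>u :: nat \<Rightarrow> ('x \<Rightarrow> real). (\<forall>j<n. u j \<in> A j) \<longrightarrow>
        (\<exists>s\<in>S \<union> {opt_zero}. \<exists>lam :: nat \<Rightarrow> real.
           (\<forall>j<n. 0 \<le> lam j) \<and> (\<Sum>j<n. lam j) > 0 \<and>
           opt_le (\<lambda>x. \<Sum>j<n. lam j * u j x) s))"

lemma cnd_mono: "cnd n A T \<Longrightarrow> T \<union> {opt_zero} \<subseteq> S \<union> {opt_zero} \<Longrightarrow> cnd n A S"
proof -
  assume c: "cnd n A T" and sub: "T \<union> {opt_zero} \<subseteq> S \<union> {opt_zero}"
  show "cnd n A S" unfolding cnd_def
  proof (intro conjI allI impI)
    show "n \<noteq> 0" using c by (simp add: cnd_def)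
    fix u :: "nat \<Rightarrow> 'a \<Rightarrow> real" assume u: "\<forall>j<n. u j \<in> A j"
    from c u obtain s lam where "s \<in> T \<union> {opt_zero}" "(\<forall>j<n. 0 \<le> lam j) \<and> (\<Sum>j<n. lam j) > 0 \<and>
           opt_le (\<lambda>x. \<Sum>j<n. lam j * u j x) s" unfolding cnd_def by blast
    then show "\<exists>s\<in>S \<union> {opt_zero}. \<exists>lam :: nat \<Rightarrow> real. (\<forall>j<n. 0 \<le> lam j) \<and> (\<Sum>j<n. lam j) > 0 \<and>
           opt_le (\<lambda>x. \<Sum>j<n. lam j * u j x) s" using sub by blast
  qed
qed

lemma pos_comb:
  assumes "v \<in> Vpos" "l1 > 0" "l2 \<ge> 0" "\<forall>x. 0 \<le> w x"
  shows "(\<lambda>x. l1 * v x + l2 * w x) \<in> Vpos"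
proof -
  from assms(1) obtain y where y: "0 < v y" "\<forall>x. 0 \<le> v x" by (auto simp: Vpos_iff)
  have "\<forall>x. 0 \<le> l1 * v x + l2 * w x" using y assms by (simp add: add_nonneg_nonneg)
  moreover have "0 < l1 * v y + l2 * w y" using y assms
    by (simp add: add_pos_nonneg)
  ultimately show ?thesis by (auto simp: Vpos_iff)
qed

lemma pos_comb2:
  assumes "v \<in> Vpos" "l2 > 0" "l1 \<ge> 0" "\<forall>x. 0 \<le> w x"
  shows "(\<lambda>x. l1 * w x + l2 * v x) \<in> Vpos"
  using pos_comb[OF assms] by (simp add: add.commute)

lemma K3_closed:
  fixes lam :: "('x \<Rightarrow> real) \<times> ('x \<Rightarrow> real) \<Rightarrow> real \<times> real"
  assumes hA: "A\<inter>Vpos\<noteq>{} \<or> cnd n U A" and hB: "B\<inter>Vpos\<noteq>{} \<or> cnd n U B"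
    and lam: "\<forall>p\<in>A\<times>B. lam p \<in> R2plus"
  defines "C \<equiv> {(\<lambda>x. fst (lam p) * fst p x + snd (lam p) * snd p x) | p. p \<in> A \<times> B}"
  shows "C \<inter> Vpos \<noteq> {} \<or> cnd n U C"
proof (cases "C \<inter> Vpos \<noteq> {}")
  case True then show ?thesis by blast
next
  case False
  have inC: "(\<lambda>x. l1 * a x + l2 * b x) \<in> C" if "a \<in> A" "b \<in> B" "lam (a,b) = (l1,l2)" for a b l1 l2
    using that unfolding C_def by (intro CollectI exI[of _ "(a,b)"]) auto
  have lamab: "0 \<le> l1 \<and> 0 \<le> l2 \<and> l1 + l2 > 0" if "a \<in> A" "b \<in> B" "lam (a,b) = (l1,l2)" for a b l1 l2
    using lam that by (force simp: R2plus_def)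
  have Vnn: "\<forall>x. 0 \<le> v x" if "v \<in> Vpos" for v using that by (simp add: Vpos_iff)
  have "cnd n U C"
  proof (cases "cnd n U A")
    case cA: True
    show ?thesis
    proof (cases "cnd n U B")
      case cB: True
      show ?thesis unfolding cnd_def
      proof (intro conjI allI impI)
        show "n \<noteq> 0" using cA by (simp add: cnd_def)
        fix u :: "nat \<Rightarrow> 'x \<Rightarrow> real" assume u: "\<forall>j<n. u j \<in> U j"
        obtain sA lA where sA: "sA \<in> A \<union> {opt_zero}" "\<forall>j<n. 0 \<le> lA j" "(\<Sum>j<n. lA j) > 0"
          "opt_le (\<lambda>x. \<Sum>j<n. lA j * u j x) sA" using cA u unfolding cnd_def by blast
        obtain sB lB where sB: "sB \<in> B \<union> {opt_zero}" "\<forall>j<n. 0 \<le> lB j" "(\<Sum>j<n. lB j) > 0"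
          "opt_le (\<lambda>x. \<Sum>j<n. lB j * u j x) sB" using cB u unfolding cnd_def by blast
        show "\<exists>s\<in>C \<union> {opt_zero}. \<exists>lam :: nat \<Rightarrow> real. (\<forall>j<n. 0 \<le> lam j) \<and> (\<Sum>j<n. lam j) > 0 \<and>
           opt_le (\<lambda>x. \<Sum>j<n. lam j * u j x) s"
        proof (cases "sA = opt_zero \<or> sB = opt_zero")
          case True then show ?thesis using sA sB by blast
        next
          case False
          then have a: "sA \<in> A" and b: "sB \<in> B" using sA sB by auto
          obtain l1 l2 where l: "lam (sA,sB) = (l1,l2)" by (cases "lam (sA,sB)")
          have ll: "0 \<le> l1" "0 \<le> l2" "l1 + l2 > 0" using lamab[OF a b l] by auto
          have sum: "(\<Sum>j<n. l1 * lA j + l2 * lB j) > 0"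
          proof -
            have e: "(\<Sum>j<n. l1 * lA j + l2 * lB j) = l1 * (\<Sum>j<n. lA j) + l2 * (\<Sum>j<n. lB j)"
              by (simp add: sum.distrib sum_distrib_left)
            show ?thesis
            proof (cases "l1 > 0")
              case True then show ?thesis unfolding e using sA(3) sB(3) ll
                by (simp add: add_pos_nonneg)
            next
              case False then have "l2 > 0" using ll by auto
              then show ?thesis unfolding e using sA(3) sB(3) ll False
                by (simp add: add_nonneg_pos)
            qed
          qed
          have le: "opt_le (\<lambda>x. \<Sum>j<n. (l1 * lA j + l2 * lB j) * u j x) (\<lambda>x. l1 * sA x + l2 * sB x)"
            unfolding opt_le_def
          proof
            fix x
            have e: "(\<Sum>j<n. (l1 * lA j + l2 * lB j) * u j x) = l1 * (\<Sum>j<n. lA j * u j x) + l2 * (\<Sum>j<n. lB j * u j x)"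
              by (simp add: sum.distrib sum_distrib_left algebra_simps)
            have "(\<Sum>j<n. lA j * u j x) \<le> sA x" "(\<Sum>j<n. lB j * u j x) \<le> sB x"
              using sA(4) sB(4) by (auto simp: opt_le_def)
            then show "(\<Sum>j<n. (l1 * lA j + l2 * lB j) * u j x) \<le> l1 * sA x + l2 * sB x"
              unfolding e using ll by (intro add_mono mult_left_mono) auto
          qed
          have nn: "\<forall>j<n. 0 \<le> l1 * lA j + l2 * lB j" using sA(2) sB(2) ll by auto
          show ?thesis
            apply (rule bexI[of _ "\<lambda>x. l1 * sA x + l2 * sB x"])
             apply (rule exI[of _ "\<lambda>j. l1 * lA j + l2 * lB j"])
            using sum le nn apply simp
            using inC[OF a b l] by simp
        qed
      qed
    next
      case cB: False
      with hB obtain v where v: "v \<in> B" "v \<in> Vpos" by blast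
      show ?thesis unfolding cnd_def
      proof (intro conjI allI impI)
        show "n \<noteq> 0" using cA by (simp add: cnd_def)
        fix u :: "nat \<Rightarrow> 'x \<Rightarrow> real" assume u: "\<forall>j<n. u j \<in> U j"
        obtain sA lA where sA: "sA \<in> A \<union> {opt_zero}" "\<forall>j<n. 0 \<le> lA j" "(\<Sum>j<n. lA j) > 0"
          "opt_le (\<lambda>x. \<Sum>j<n. lA j * u j x) sA" using cA u unfolding cnd_def by blast
        show "\<exists>s\<in>C \<union> {opt_zero}. \<exists>lam :: nat \<Rightarrow> real. (\<forall>j<n. 0 \<le> lam j) \<and> (\<Sum>j<n. lam j) > 0 \<and>
           opt_le (\<lambda>x. \<Sum>j<n. lam j * u j x) s"
        proof (cases "sA = opt_zero")
          case True then show ?thesis using sA by blast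
        next
          case False
          then have a: "sA \<in> A" using sA by auto
          obtain l1 l2 where l: "lam (sA,v) = (l1,l2)" by (cases "lam (sA,v)")
          have ll: "0 \<le> l1" "0 \<le> l2" "l1 + l2 > 0" using lamab[OF a v(1) l] by auto
          have l1: "l1 > 0"
          proof (rule ccontr)
            assume "\<not> l1 > 0"
            then have "l1 = 0" using ll by auto
            then have "(\<lambda>x. l1 * sA x + l2 * v x) = (\<lambda>x. 0 * sA x + l2 * v x)" by simp
            moreover have "(\<lambda>x. 0 * sA x + l2 * v x) \<in> Vpos"
              using pos_comb2[OF v(2), of l2 0 "\<lambda>_. 0"] ll \<open>l1 = 0\<close> by simp
            ultimately show False using inC[OF a v(1) l] False \<open>\<not> C \<inter> Vpos \<noteq> {}\<close> by auto
          qed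
          have le: "opt_le (\<lambda>x. \<Sum>j<n. (l1 * lA j) * u j x) (\<lambda>x. l1 * sA x + l2 * v x)"
            unfolding opt_le_def
          proof
            fix x
            have e: "(\<Sum>j<n. (l1 * lA j) * u j x) = l1 * (\<Sum>j<n. lA j * u j x)"
              by (simp add: sum_distrib_left algebra_simps)
            have "(\<Sum>j<n. lA j * u j x) \<le> sA x" using sA(4) by (auto simp: opt_le_def)
            moreover have "0 \<le> l2 * v x" using ll Vnn[OF v(2)] by simp
            ultimately show "(\<Sum>j<n. (l1 * lA j) * u j x) \<le> l1 * sA x + l2 * v x"
              unfolding e using ll by (smt (verit) mult_left_mono)
          qed
          have sum: "(\<Sum>j<n. l1 * lA j) > 0" using l1 sA(3) by (simp add: sum_distrib_left[symmetric])
          have nn: "\<forall>j<n. 0 \<le> l1 * lA j" using sA(2) ll by auto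
          show ?thesis
            apply (rule bexI[of _ "\<lambda>x. l1 * sA x + l2 * v x"])
             apply (rule exI[of _ "\<lambda>j. l1 * lA j"])
            using sum le nn apply simp
            using inC[OF a v(1) l] by simp
        qed
      qed
    qed
  next
    case cA: False
    with hA obtain v where v: "v \<in> A" "v \<in> Vpos" by blast
    show ?thesis
    proof (cases "cnd n U B")
      case cB: True
      show ?thesis unfolding cnd_def
      proof (intro conjI allI impI)
        show "n \<noteq> 0" using cB by (simp add: cnd_def)
        fix u :: "nat \<Rightarrow> 'x \<Rightarrow> real" assume u: "\<forall>j<n. u j \<in> U j"
        obtain sB lB where sB: "sB \<in> B \<union> {opt_zero}" "\<forall>j<n. 0 \<le> lB j" "(\<Sum>j<n. lB j) > 0"
          "opt_le (\<lambda>x. \<Sum>j<n. lB j * u j x) sB" using cB u unfolding cnd_def by blast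
        show "\<exists>s\<in>C \<union> {opt_zero}. \<exists>lam :: nat \<Rightarrow> real. (\<forall>j<n. 0 \<le> lam j) \<and> (\<Sum>j<n. lam j) > 0 \<and>
           opt_le (\<lambda>x. \<Sum>j<n. lam j * u j x) s"
        proof (cases "sB = opt_zero")
          case True then show ?thesis using sB by blast
        next
          case False
          then have b: "sB \<in> B" using sB by auto
          obtain l1 l2 where l: "lam (v,sB) = (l1,l2)" by (cases "lam (v,sB)")
          have ll: "0 \<le> l1" "0 \<le> l2" "l1 + l2 > 0" using lamab[OF v(1) b l] by auto
          have l2: "l2 > 0"
          proof (rule ccontr)
            assume "\<not> l2 > 0"
            then have "l2 = 0" using ll by auto
            then have "(\<lambda>x. l1 * v x + l2 * sB x) = (\<lambda>x. l1 * v x + 0 * sB x)" by simp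
            moreover have "(\<lambda>x. l1 * v x + 0 * sB x) \<in> Vpos"
              using pos_comb[OF v(2), of l1 0 "\<lambda>_. 0"] ll \<open>l2 = 0\<close> by simp
            ultimately show False using inC[OF v(1) b l] False \<open>\<not> C \<inter> Vpos \<noteq> {}\<close> by auto
          qed
          have le: "opt_le (\<lambda>x. \<Sum>j<n. (l2 * lB j) * u j x) (\<lambda>x. l1 * v x + l2 * sB x)"
            unfolding opt_le_def
          proof
            fix x
            have e: "(\<Sum>j<n. (l2 * lB j) * u j x) = l2 * (\<Sum>j<n. lB j * u j x)"
              by (simp add: sum_distrib_left algebra_simps)
            have "(\<Sum>j<n. lB j * u j x) \<le> sB x" using sB(4) by (auto simp: opt_le_def)
            moreover have "0 \<le> l1 * v x" using ll Vnn[OF v(2)] by simp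
            ultimately show "(\<Sum>j<n. (l2 * lB j) * u j x) \<le> l1 * v x + l2 * sB x"
              unfolding e using ll by (smt (verit) mult_left_mono)
          qed
          have sum: "(\<Sum>j<n. l2 * lB j) > 0" using l2 sB(3) by (simp add: sum_distrib_left[symmetric])
          have nn: "\<forall>j<n. 0 \<le> l2 * lB j" using sB(2) ll by auto
          show ?thesis
            apply (rule bexI[of _ "\<lambda>x. l1 * v x + l2 * sB x"])
             apply (rule exI[of _ "\<lambda>j. l2 * lB j"])
            using sum le nn apply simp
            using inC[OF v(1) b l] by simp
        qed
      qed
    next
      case cB: False
      with hB obtain w where w: "w \<in> B" "w \<in> Vpos" by blast
      obtain l1 l2 where l: "lam (v,w) = (l1,l2)" by (cases "lam (v,w)")
      have ll: "0 \<le> l1" "0 \<le> l2" "l1 + l2 > 0" using lamab[OF v(1) w(1) l] by auto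
      have "(\<lambda>x. l1 * v x + l2 * w x) \<in> Vpos"
      proof (cases "l1 > 0")
        case True show ?thesis using pos_comb[OF v(2) True ll(2) Vnn[OF w(2)]] .
      next
        case False then have "l2 > 0" using ll by auto
        then show ?thesis using pos_comb2[OF w(2) _ ll(1) Vnn[OF v(2)]] by blast
      qed
      then show ?thesis using inC[OF v(1) w(1) l] False by blast
    qed
  qed
  then show ?thesis by blast
qed

theorem theorem5:
  fixes n :: nat and A :: "nat \<Rightarrow> ('x \<Rightarrow> real) set" and S :: "('x \<Rightarrow> real) set"
  assumes "\<forall>j<n. A j \<in> Qs" and "S \<in> Qs"
  shows "S \<in> Ex (A ` {..<n}) \<longleftrightarrow>
    (S \<inter> Vpos \<noteq> {} \<or>
     (n \<noteq> 0 \<and>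
      (\<forall>u :: nat \<Rightarrow> ('x \<Rightarrow> real). (\<forall>j<n. u j \<in> A j) \<longrightarrow>
        (\<exists>s\<in>S \<union> {opt_zero}. \<exists>lam :: nat \<Rightarrow> real.
           (\<forall>j<n. 0 \<le> lam j) \<and> (\<Sum>j<n. lam j) > 0 \<and>
           opt_le (\<lambda>x. \<Sum>j<n. lam j * u j x) s))))"
proof -
  have main: "S \<in> Ex (A ` {..<n}) \<longleftrightarrow> (S \<inter> Vpos \<noteq> {} \<or> cnd n A S)"
  proof
    assume SE: "S \<in> Ex (A ` {..<n})"
    define K0 where "K0 = {T\<in>Qs. T \<inter> Vpos \<noteq> {} \<or> cnd n A T}"
    show "S \<inter> Vpos \<noteq> {} \<or> cnd n A S"
    proof (cases "{opt_zero} \<in> K0")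
      case True
      have "opt_zero \<notin> Vpos" by (simp add: Vpos_iff opt_zero_def)
      then have "cnd n A {opt_zero}" using True by (auto simp: K0_def)
      then have "cnd n A S" by (rule cnd_mono) auto
      then show ?thesis by blast
    next
      case False
      have Ain: "A ` {..<n} \<subseteq> K0"
      proof
        fix T assume "T \<in> A ` {..<n}"
        then obtain i where i: "i < n" "T = A i" by auto
        have "cnd n A (A i)" unfolding cnd_def
        proof (intro conjI allI impI)
          show "n \<noteq> 0" using i by auto
          fix u :: "nat \<Rightarrow> 'x \<Rightarrow> real" assume u: "\<forall>j<n. u j \<in> A j"
          have "(\<Sum>j<n. (if j = i then 1 else 0) * u j x) = u i x" for x
          proof -
            have "(\<Sum>j<n. (if j = i then 1 else 0) * u j x) = (\<Sum>j<n. if j = i then u j x else 0)"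
              by (rule sum.cong) auto
            also have "\<dots> = u i x" using i by (simp add: sum.delta)
            finally show ?thesis .
          qed
          moreover have "(\<Sum>j<n. (if j = i then 1 else 0::real)) = 1" using i by (simp add: sum.delta)
          ultimately show "\<exists>s\<in>A i \<union> {opt_zero}. \<exists>lam :: nat \<Rightarrow> real. (\<forall>j<n. 0 \<le> lam j) \<and> (\<Sum>j<n. lam j) > 0 \<and>
             opt_le (\<lambda>x. \<Sum>j<n. lam j * u j x) s"
            using u i by (intro bexI[of _ "u i"] exI[of _ "\<lambda>j. if j = i then 1 else 0"]) (auto simp: opt_le_def)
        qed
        then show "T \<in> K0" using i assms(1) by (auto simp: K0_def)
      qed
      have coh: "coherent K0" unfolding coherent_def
      proof (intro conjI ballI allI impI)
        show "K0 \<subseteq> Qs" by (auto simp: K0_def)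
        show "{opt_zero} \<notin> K0" by (rule False)
      next
        fix T assume T: "T \<in> K0"
        have "opt_zero \<notin> Vpos" by (simp add: Vpos_iff opt_zero_def)
        moreover have "cnd n A (T - {opt_zero})" if "cnd n A T"
          using that by (rule cnd_mono) auto
        ultimately show "T - {opt_zero} \<in> K0" using T by (auto simp: K0_def Qs_def)
      next
        show "Vpos_s \<subseteq> K0" by (auto simp: Vpos_s_def K0_def Qs_def)
      next
        fix T Q :: "('x \<Rightarrow> real) set" assume T: "T \<in> K0" and Q: "Q \<in> Qs"
        have "cnd n A (T \<union> Q)" if "cnd n A T"
          using that by (rule cnd_mono) auto
        then show "T \<union> Q \<in> K0" using T Q by (auto simp: K0_def Qs_def)
      next
        fix T B :: "('x \<Rightarrow> real) set" and lam :: "('x \<Rightarrow> real) \<times> ('x \<Rightarrow> real) \<Rightarrow> real \<times> real"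
        assume T: "T \<in> K0" and B: "B \<in> K0" and lam: "\<forall>p\<in>T \<times> B. lam p \<in> R2plus"
        have fin: "finite {(\<lambda>x. fst (lam p) * fst p x + snd (lam p) * snd p x) | p. p \<in> T \<times> B}"
          using T B by (intro finite_image_set) (auto simp: K0_def Qs_def)
        show "{(\<lambda>x. fst (lam p) * fst p x + snd (lam p) * snd p x) | p. p \<in> T \<times> B} \<in> K0"
        proof -
          have "T \<inter> Vpos \<noteq> {} \<or> cnd n A T" "B \<inter> Vpos \<noteq> {} \<or> cnd n A B" using T B by (simp_all add: K0_def)
          from K3_closed[OF this lam] fin show ?thesis unfolding K0_def Qs_def by blast
        qed
      qed
      have "K0 \<in> Kbar_of (A ` {..<n})" using coh Ain by (simp add: Kbar_of_def)
      then have "Ex (A ` {..<n}) \<subseteq> K0" unfolding Ex_def by auto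
      then show ?thesis using SE by (auto simp: K0_def)
    qed
  next
    assume R: "S \<inter> Vpos \<noteq> {} \<or> cnd n A S"
    have "S \<in> K" if K: "coherent K" and AK: "A ` {..<n} \<subseteq> K" for K
    proof (cases "S \<inter> Vpos \<noteq> {}")
      case True
      then obtain v where v: "v \<in> S" "v \<in> Vpos" by blast
      then have "{v} \<in> K" using K unfolding coherent_def Vpos_s_def by blast
      then have "{v} \<union> S \<in> K" using K assms(2) unfolding coherent_def by blast
      moreover have "{v} \<union> S = S" using v by blast
      ultimately show ?thesis by simp
    next
      case False
      then have c: "cnd n A S" using R by blast
      have "\<exists>R\<in>K. \<forall>r\<in>R. (\<exists>s\<in>S\<union>{opt_zero}. opt_le r s)"
      proof (rule comb[OF K])
        show "\<forall>j<n. A j \<in> K" using AK by auto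
        show "\<forall>u. (\<forall>j<n. u j \<in> A j) \<longrightarrow> (\<exists>lam::nat\<Rightarrow>real. (\<forall>j<n. 0 \<le> lam j) \<and> (\<Sum>j<n. lam j) > 0 \<and>
           (\<exists>s\<in>S\<union>{opt_zero}. opt_le (\<lambda>x. \<Sum>j<n. lam j * u j x) s))"
          using c unfolding cnd_def by blast
      qed
      then obtain R where "R \<in> K" "\<forall>r\<in>R. \<exists>s\<in>S\<union>{opt_zero}. opt_le r s" by blast
      from dom[OF K this(1) assms(2) this(2)] show ?thesis .
    qed
    then show "S \<in> Ex (A ` {..<n})" using assms(2) unfolding Ex_def Kbar_of_def by auto
  qed
  then show ?thesis unfolding cnd_def .
qed

end
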